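(* Assume $\Pi_\alpha\neq\emptyset$ and that Assumptions 1 and 2 (stated in the context) hold. Then any E-optimal policy $\pi^E$ satisfies, for almost every $x$, $$\pi^E(x)=\mathrm{clip}_\alpha\!\left(\frac{\sqrt{(v^\star)^\top\Sigma_1(x)v^\star}}{\sqrt{(v^\star)^\top\Sigma_1(x)v^\star}+\sqrt{(v^\star)^\top\Sigma_0(x)v^\star}}\right),$$ where $v^\star=v^\star(\pi^E)\in\mathbb R^{t_{\max}+1}$ is the unit eigenvector corresponding to $\lambda_{\max}(\Sigma_{\mathrm{eff}}(\pi^E))$.
   Context: Discrete horizon $\{0,\dots,t_{\max}\}$; unit $(X,A,T,C)$, $A\in\{0,1\}$, potential event times $T(a)$; observed $\mathcal O=(X,A,\widetilde T,\Delta)$, $\widetilde T=\min\{T,C\}$, $\Delta=\mathbf 1(T\le C)$. $S_t(x,a)=\mathbb P(T>t\mid X=x,A=a)$, $\lambda^S_t(x,a)=\mathbb P(\widetilde T=t,\Delta=1\mid\widetilde T\ge t,X=x,A=a)$, $\lambda^G_t(x,a)=\mathbb P(\widetilde T=t,\Delta=0\mid\widetilde T\ge t,X=x,A=a)$, $G_{t-1}=\prod_{i=0}^{t-1}(1-\lambda^G_i/(1-\lambda^S_i))$, $S_{-1}=G_{-1}\equiv1$; $\xi_t(\mathcal O)=\sum_{i=0}^t\frac{\mathbf 1(\widetilde T=i,\Delta=1)-\mathbf 1(\widetilde T\ge i)\lambda^S_i(X,A)}{S_i(X,A)G_{i-1}(X,A)}$. $\boldsymbol S(X,a)=(S_t(X,a))_{t=0}^{t_{\max}}$,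 $\boldsymbol\xi=(\xi_t(\mathcal O))_t$, $\tau_t=\mathbb E[S_t(X,1)-S_t(X,0)]$, $\boldsymbol\tau=(\tau_t)_t$, $b(X)=\boldsymbol S(X,1)-\boldsymbol S(X,0)-\boldsymbol\tau$. $\Sigma_a(x)=\mathrm{Var}(\boldsymbol S(X,a)\odot\boldsymbol\xi\mid X=x,A=a)$. For a policy $\pi$, $\Sigma_{\mathrm{eff}}(\pi)=\mathbb E[\Sigma_1(X)/\pi(X)+\Sigma_0(X)/(1-\pi(X))]+\mathbb E[b(X)b(X)^\top]$. $\Pi_\alpha=\{\pi:\alpha\le\pi(x)\le1-\alpha\ \forall x\}$, $\mathrm{clip}_\alpha(u)=\min\{1-\alpha,\max\{\alpha,u\}\}$. A policy $\pi^E$ is E-optimal if $\pi^E\in\arg\min_{\pi\in\Pi_\alpha}\lambda_{\max}(\Sigma_{\mathrm{eff}}(\pi))$, $\lambda_{\max}$ the largest eigenvalue. Assumption 1: $T(a)=T$ when $A=a$; $0<\pi(x)<1$ whenever $\mathbb P(X=x)>0$; $A\perp(T(0),T(1))\mid X$. Assumption 2: for $\mathbb P(X=x,A=a)>0$ and each horizon $t$: $G_{t-1}(x,a)>0$, $S_{t-1}(x,a)>0$, $T\perp C\mid X=x,A=a$. *)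

theory Defs
  imports "HOL-Probability.Probability" "Jordan_Normal_Form.Char_Poly"
begin

text \<open>Conditional law of the observed pair (Ttilde, Delta) given X = x, A = a,
  where T ~ QT x a and C ~ QC x a are conditionally independent (Assumption 2).\<close>

definition obs_pmf :: "nat pmf \<Rightarrow> nat pmf \<Rightarrow> (nat \<times> bool) pmf" where
  "obs_pmf PT PC = map_pmf (\<lambda>(t, c). (min t c, t \<le> c)) (pair_pmf PT PC)"

definition surv :: "nat pmf \<Rightarrow> nat \<Rightarrow> real" where
  "surv PT t = measure_pmf.prob PT {s. t < s}"

definition hazS :: "nat pmf \<Rightarrow> nat pmf \<Rightarrow> nat \<Rightarrow> real" where
  "hazS PT PC t = measure_pmf.prob (obs_pmf PT PC) {(s, d). s = t \<and> d}
                  / measure_pmf.prob (obs_pmf PT PC) {(s, d). t \<le> s}"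

definition hazG :: "nat pmf \<Rightarrow> nat pmf \<Rightarrow> nat \<Rightarrow> real" where
  "hazG PT PC t = measure_pmf.prob (obs_pmf PT PC) {(s, d). s = t \<and> \<not> d}
                  / measure_pmf.prob (obs_pmf PT PC) {(s, d). t \<le> s}"

text \<open>Shifted quantities: survS_m i = S_{i-1}, censG_m i = G_{i-1}, with S_{-1} = G_{-1} = 1.\<close>
definition survm :: "nat pmf \<Rightarrow> nat \<Rightarrow> real" where
  "survm PT i = (if i = 0 then 1 else surv PT (i - 1))"

definition censGm :: "nat pmf \<Rightarrow> nat pmf \<Rightarrow> nat \<Rightarrow> real" where
  "censGm PT PC i = (\<Prod>k<i. 1 - hazG PT PC k / (1 - hazS PT PC k))"

definition xi :: "nat pmf \<Rightarrow> nat pmf \<Rightarrow> nat \<Rightarrow> nat \<Rightarrow> bool \<Rightarrow> real" where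
  "xi PT PC t s d = (\<Sum>i\<le>t.
      ((if s = i \<and> d then 1 else 0) - (if i \<le> s then 1 else 0) * hazS PT PC i)
      / (surv PT i * censGm PT PC i))"

definition Sigma_cond :: "nat \<Rightarrow> nat pmf \<Rightarrow> nat pmf \<Rightarrow> real mat" where
  "Sigma_cond tmax PT PC = mat (Suc tmax) (Suc tmax) (\<lambda>(i, j).
     let Y = (\<lambda>k (s, d). surv PT k * xi PT PC k s d) in
     measure_pmf.expectation (obs_pmf PT PC) (\<lambda>ob. Y i ob * Y j ob)
     - measure_pmf.expectation (obs_pmf PT PC) (Y i)
       * measure_pmf.expectation (obs_pmf PT PC) (Y j))"

text \<open>Data-generating model: PX law of X; QT x a, QC x a the conditional laws of
  T and C given X = x, A = a (a = True means treatment 1).\<close>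

definition tau :: "'x measure \<Rightarrow> ('x \<Rightarrow> bool \<Rightarrow> nat pmf) \<Rightarrow> nat \<Rightarrow> real" where
  "tau PX QT t = (\<integral>x. surv (QT x True) t - surv (QT x False) t \<partial>PX)"

definition bvec :: "'x measure \<Rightarrow> ('x \<Rightarrow> bool \<Rightarrow> nat pmf) \<Rightarrow> 'x \<Rightarrow> nat \<Rightarrow> real" where
  "bvec PX QT x t = surv (QT x True) t - surv (QT x False) t - tau PX QT t"

definition Sigma_eff :: "nat \<Rightarrow> 'x measure \<Rightarrow> ('x \<Rightarrow> bool \<Rightarrow> nat pmf) \<Rightarrow> ('x \<Rightarrow> bool \<Rightarrow> nat pmf)
    \<Rightarrow> ('x \<Rightarrow> real) \<Rightarrow> real mat" where
  "Sigma_eff tmax PX QT QC \<pi> = mat (Suc tmax) (Suc tmax) (\<lambda>(i, j).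
     (\<integral>x. Sigma_cond tmax (QT x True) (QC x True) $$ (i, j) / \<pi> x
         + Sigma_cond tmax (QT x False) (QC x False) $$ (i, j) / (1 - \<pi> x) \<partial>PX)
     + (\<integral>x. bvec PX QT x i * bvec PX QT x j \<partial>PX))"

definition lambda_max :: "real mat \<Rightarrow> real" where
  "lambda_max M = Max {k. eigenvalue M k}"

definition Pi_alpha :: "'x measure \<Rightarrow> real \<Rightarrow> ('x \<Rightarrow> real) set" where
  "Pi_alpha PX \<alpha> = {\<pi> \<in> borel_measurable PX. \<forall>x\<in>space PX. \<alpha> \<le> \<pi> x \<and> \<pi> x \<le> 1 - \<alpha>}"

definition clip :: "real \<Rightarrow> real \<Rightarrow> real" where
  "clip \<alpha> u = min (1 - \<alpha>) (max \<alpha> u)"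

definition E_optimal :: "nat \<Rightarrow> 'x measure \<Rightarrow> ('x \<Rightarrow> bool \<Rightarrow> nat pmf) \<Rightarrow> ('x \<Rightarrow> bool \<Rightarrow> nat pmf)
    \<Rightarrow> real \<Rightarrow> ('x \<Rightarrow> real) \<Rightarrow> bool" where
  "E_optimal tmax PX QT QC \<alpha> \<pi>E \<longleftrightarrow> \<pi>E \<in> Pi_alpha PX \<alpha> \<and>
     (\<forall>\<pi>\<in>Pi_alpha PX \<alpha>. lambda_max (Sigma_eff tmax PX QT QC \<pi>E)
                          \<le> lambda_max (Sigma_eff tmax PX QT QC \<pi>))"

end

theory Submission
  imports Defs
begin

definition mvf :: "real mat \<Rightarrow> nat \<Rightarrow> (nat \<Rightarrow> real) \<Rightarrow> nat \<Rightarrow> real" where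
  "mvf A n y i = (\<Sum>j<n. A $$ (i, j) * y j)"
definition ipf :: "nat \<Rightarrow> (nat \<Rightarrow> real) \<Rightarrow> (nat \<Rightarrow> real) \<Rightarrow> real" where
  "ipf n x y = (\<Sum>i<n. x i * y i)"
definition bil :: "real mat \<Rightarrow> nat \<Rightarrow> (nat \<Rightarrow> real) \<Rightarrow> (nat \<Rightarrow> real) \<Rightarrow> real" where
  "bil A n x y = (\<Sum>i<n. \<Sum>j<n. x i * A $$ (i, j) * y j)"
definition symm :: "real mat \<Rightarrow> nat \<Rightarrow> bool" where
  "symm A n \<longleftrightarrow> (\<forall>i<n. \<forall>j<n. A $$ (i, j) = A $$ (j, i))"

lemma bil_mvf: "bil A n x y = ipf n x (mvf A n y)"
  unfolding bil_def ipf_def mvf_def by (simp add: sum_distrib_left mult.assoc)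

lemma ipf_comm: "ipf n x y = ipf n y x"
  unfolding ipf_def by (simp add: mult.commute)

lemma bil_sym: assumes "symm A n" shows "bil A n x y = bil A n y x"
proof -
  have "bil A n x y = (\<Sum>j<n. \<Sum>i<n. x i * A $$ (i, j) * y j)"
    unfolding bil_def by (rule sum.swap)
  also have "\<dots> = bil A n y x" unfolding bil_def
    by (intro sum.cong refl) (use assms in \<open>auto simp: symm_def mult.commute mult.left_commute\<close>)
  finally show ?thesis .
qed

lemma bil_add_left: "bil A n (\<lambda>i. x i + y i) z = bil A n x z + bil A n y z"
  unfolding bil_def by (simp add: distrib_right sum.distrib)
lemma bil_add_right: "bil A n z (\<lambda>i. x i + y i) = bil A n z x + bil A n z y"
  unfolding bil_def by (simp add: distrib_left sum.distrib)
lemma bil_scale_left: "bil A n (\<lambda>i. c * x i) z = c * bil A n x z"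
  unfolding bil_def by (simp add: sum_distrib_left mult.assoc)
lemma bil_scale_right: "bil A n z (\<lambda>i. c * x i) = c * bil A n z x"
  unfolding bil_def by (simp add: sum_distrib_left mult.left_commute)
lemma ipf_add_left: "ipf n (\<lambda>i. x i + y i) z = ipf n x z + ipf n y z"
  unfolding ipf_def by (simp add: distrib_right sum.distrib)
lemma ipf_add_right: "ipf n z (\<lambda>i. x i + y i) = ipf n z x + ipf n z y"
  unfolding ipf_def by (simp add: distrib_left sum.distrib)
lemma ipf_scale_left: "ipf n (\<lambda>i. c * x i) z = c * ipf n x z"
  unfolding ipf_def by (simp add: sum_distrib_left mult.assoc)
lemma ipf_scale_right: "ipf n z (\<lambda>i. c * x i) = c * ipf n z x"
  unfolding ipf_def by (simp add: sum_distrib_left mult.left_commute)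

lemma bil_quad_expand: assumes "symm A n"
  shows "bil A n (\<lambda>i. x i + y i) (\<lambda>i. x i + y i) = bil A n x x + 2 * bil A n x y + bil A n y y"
  using bil_sym[OF assms, of y x] by (simp add: bil_add_left bil_add_right)

lemma ipf_quad_expand:
  "ipf n (\<lambda>i. x i + y i) (\<lambda>i. x i + y i) = ipf n x x + 2 * ipf n x y + ipf n y y"
  using ipf_comm[of n y x] by (simp add: ipf_add_left ipf_add_right)

lemma ipf_nonneg: "0 \<le> ipf n x x"
  unfolding ipf_def by (simp add: sum_nonneg)

lemma ipf_zero: "ipf n x x = 0 \<Longrightarrow> i < n \<Longrightarrow> x i = 0"
  unfolding ipf_def by (subst (asm) sum_nonneg_eq_0_iff) auto

lemma sq_le_ipf: "i < n \<Longrightarrow> x i * x i \<le> ipf n x x"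
  unfolding ipf_def by (rule member_le_sum) auto

lemma lin_quad_zero:
  fixes c d :: real
  assumes "\<forall>s. 0 \<le> 2 * s * c + s * s * d" shows "c = 0"
proof (rule ccontr)
  assume c: "c \<noteq> 0"
  define D where "D = \<bar>d\<bar> + 1"
  have D: "D > 0" "d < D" unfolding D_def by auto
  define s where "s = - c / D"
  have "0 \<le> 2 * s * c + s * s * d" using assms by blast
  hence "0 \<le> (2 * s * c + s * s * d) * (D * D)" using D by simp
  also have "(2 * s * c + s * s * d) * (D * D) = c * c * (d - 2 * D)"
    unfolding s_def using D by (simp add: field_simps)
  finally have f: "0 \<le> c * c * (d - 2 * D)" .
  have cc: "0 < c * c" using c by (metis not_real_square_gt_zero)
  have "c * c * (d - 2 * D) < 0" using cc D by (intro mult_pos_neg) auto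
  with f show False by simp
qed

definition ek :: "nat \<Rightarrow> nat \<Rightarrow> real" where "ek k i = (if i = k then 1 else 0)"

lemma sum_ek: assumes "k < n" shows "(\<Sum>i<n. ek k i * f i) = f k"
proof -
  have "(\<Sum>i<n. ek k i * f i) = (\<Sum>i<n. if i = k then f k else 0)"
    by (rule sum.cong) (auto simp: ek_def)
  then show ?thesis using assms by simp
qed
lemma sum_ek': "k < n \<Longrightarrow> (\<Sum>i<n. f i * ek k i) = f k"
  using sum_ek[of k n f] by (simp add: mult.commute)

lemma bil_ek_right: "k < n \<Longrightarrow> bil A n u (ek k) = (\<Sum>i<n. u i * A $$ (i, k))"
  unfolding bil_def ek_def by (simp add: if_distrib cong: if_cong)

lemma lagrange:
  assumes S: "symm A n" and k: "k < n"
    and bound: "\<forall>w. bil A n w w \<le> m * ipf n w w"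
    and eq: "bil A n u u = m * ipf n u u"
  shows "mvf A n u k = m * u k"
proof -
  have bue: "bil A n u (ek k) = mvf A n u k"
    using bil_sym[OF S, of u "ek k"] by (simp add: bil_mvf ipf_def sum_ek k)
  have bee: "bil A n (ek k) (ek k) = A $$ (k, k)"
    unfolding bil_def by (simp add: sum_ek' sum_ek k)
  have iue: "ipf n u (ek k) = u k" by (simp add: ipf_def sum_ek' k)
  have iee: "ipf n (ek k) (ek k) = 1" by (simp add: ipf_def sum_ek' k) (simp add: ek_def)
  have "\<forall>s. 0 \<le> 2 * s * (m * u k - mvf A n u k) + s * s * (m - A $$ (k, k))"
  proof
    fix s :: real
    have "bil A n (\<lambda>i. u i + s * ek k i) (\<lambda>i. u i + s * ek k i) \<le> m * ipf n (\<lambda>i. u i + s * ek k i) (\<lambda>i. u i + s * ek k i)"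
      using bound by blast
    then show "0 \<le> 2 * s * (m * u k - mvf A n u k) + s * s * (m - A $$ (k, k))"
      unfolding bil_quad_expand[OF S] ipf_quad_expand
      by (simp add: bil_scale_left bil_scale_right ipf_scale_left ipf_scale_right bue bee iue iee eq algebra_simps)
  qed
  from lin_quad_zero[OF this] show ?thesis by simp
qed

lemma cont_ipf: "continuous_on UNIV (\<lambda>u::nat \<Rightarrow> real. ipf n (f u) (g u))"
  if "\<And>i. continuous_on UNIV (\<lambda>u. f u i)" "\<And>i. continuous_on UNIV (\<lambda>u. g u i)"
  unfolding ipf_def by (intro continuous_intros that)

lemma cont_bil: "continuous_on UNIV (\<lambda>u::nat \<Rightarrow> real. bil A n u u)"
  unfolding bil_def by (intro continuous_intros continuous_on_product_coordinates)

lemma compact_sph: "compact {u::nat \<Rightarrow> real. (\<forall>i. n \<le> i \<longrightarrow> u i = 0) \<and> ipf n u u = 1 \<and> ipf n v u = 0}"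
proof -
  define B where "B = PiE (UNIV::nat set) (\<lambda>i. if i < n then {-1..1::real} else {0})"
  have "compactin (product_topology (\<lambda>i. euclidean) UNIV) B"
    unfolding B_def by (subst compactin_PiE) auto
  hence cB: "compact B" by (simp add: euclidean_product_topology)
  have c1: "closed {u::nat \<Rightarrow> real. ipf n u u = 1}"
    by (rule closed_Collect_eq) (auto intro!: cont_ipf continuous_on_product_coordinates)
  have c2: "closed {u::nat \<Rightarrow> real. ipf n v u = 0}"
    by (rule closed_Collect_eq) (auto intro!: cont_ipf continuous_on_product_coordinates)
  have eq: "{u::nat \<Rightarrow> real. (\<forall>i. n \<le> i \<longrightarrow> u i = 0) \<and> ipf n u u = 1 \<and> ipf n v u = 0}
      = {u. ipf n u u = 1} \<inter> ({u. ipf n v u = 0} \<inter> B)"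
  proof (intro equalityI subsetI)
    fix u :: "nat \<Rightarrow> real"
    assume u: "u \<in> {u::nat \<Rightarrow> real. (\<forall>i. n \<le> i \<longrightarrow> u i = 0) \<and> ipf n u u = 1 \<and> ipf n v u = 0}"
    have "u \<in> B" unfolding B_def
    proof (intro PiE_I)
      fix i
      show "u i \<in> (if i < n then {-1..1} else {0})"
      proof (cases "i < n")
        case True
        have "u i * u i \<le> 1" using sq_le_ipf[OF True, of u] u by simp
        hence "\<bar>u i\<bar> \<le> 1" by (metis abs_le_square_iff abs_mult_self_eq power2_eq_square mult_1_right abs_one)
        then show ?thesis using True by auto
      qed (use u in auto)
    qed auto
    then show "u \<in> {u. ipf n u u = 1} \<inter> ({u. ipf n v u = 0} \<inter> B)" using u by auto
  next
    fix u :: "nat \<Rightarrow> real"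
    assume "u \<in> {u. ipf n u u = 1} \<inter> ({u. ipf n v u = 0} \<inter> B)"
    then show "u \<in> {u::nat \<Rightarrow> real. (\<forall>i. n \<le> i \<longrightarrow> u i = 0) \<and> ipf n u u = 1 \<and> ipf n v u = 0}"
      unfolding B_def by (auto simp: PiE_iff split: if_splits) (metis leD)
  qed
  show ?thesis unfolding eq using c1 c2 cB by blast
qed

definition restr :: "nat \<Rightarrow> (nat \<Rightarrow> real) \<Rightarrow> nat \<Rightarrow> real" where
  "restr n u i = (if i < n then u i else 0)"

lemma ipf_restr[simp]: "ipf n (restr n x) y = ipf n x y" "ipf n y (restr n x) = ipf n y x"
  unfolding ipf_def restr_def by (auto intro!: sum.cong)
lemma bil_restr[simp]: "bil A n (restr n x) y = bil A n x y" "bil A n y (restr n x) = bil A n y x"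
  unfolding bil_def restr_def by (auto intro!: sum.cong)

lemma normalize_vec:
  assumes "ipf n w w \<noteq> 0"
  obtains c where "c > 0" "ipf n (restr n (\<lambda>i. c * w i)) (restr n (\<lambda>i. c * w i)) = 1"
    "c * c * ipf n w w = 1"
proof -
  have p: "ipf n w w > 0" using assms ipf_nonneg[of n w] by linarith
  define c where "c = 1 / sqrt (ipf n w w)"
  have c: "c > 0" unfolding c_def using p by simp
  have cc: "c * c * ipf n w w = 1" unfolding c_def using p
    by (simp add: field_simps)
  have "ipf n (restr n (\<lambda>i. c * w i)) (restr n (\<lambda>i. c * w i)) = 1"
    using cc by (simp add: ipf_scale_left ipf_scale_right mult.assoc)
  then show ?thesis using that c cc by blast
qed

lemma rayleigh_max:
  assumes n: "0 < n"
  obtains u where "ipf n u u = 1" "\<forall>w. bil A n w w \<le> bil A n u u * ipf n w w"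
proof -
  define K where "K = {u::nat \<Rightarrow> real. (\<forall>i. n \<le> i \<longrightarrow> u i = 0) \<and> ipf n u u = 1 \<and> ipf n (\<lambda>_. 0) u = 0}"
  have cK: "compact K" unfolding K_def by (rule compact_sph)
  have "ipf n (ek 0) (ek 0) = 1" by (simp add: ipf_def sum_ek' n) (simp add: ek_def)
  hence "ek 0 \<in> K" unfolding K_def using n by (auto simp: ek_def ipf_def)
  hence neK: "K \<noteq> {}" by auto
  obtain u where u: "u \<in> K" and umax: "\<forall>y\<in>K. bil A n y y \<le> bil A n u u"
    using continuous_attains_sup[OF cK neK continuous_on_subset[OF cont_bil subset_UNIV]] by blast
  show ?thesis
  proof (rule that)
    show "ipf n u u = 1" using u unfolding K_def by auto
    show "\<forall>w. bil A n w w \<le> bil A n u u * ipf n w w"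
    proof
      fix w
      show "bil A n w w \<le> bil A n u u * ipf n w w"
      proof (cases "ipf n w w = 0")
        case True
        have "restr n w = (\<lambda>_. 0)" using ipf_zero[OF True] by (auto simp: restr_def)
        hence "bil A n w w = 0" using bil_restr(1)[of A n w w] bil_restr(2)[of A n "(\<lambda>_. 0)" w]
          by (simp add: bil_def)
        then show ?thesis using True by simp
      next
        case False
        obtain c where c: "c > 0" "ipf n (restr n (\<lambda>i. c * w i)) (restr n (\<lambda>i. c * w i)) = 1"
          "c * c * ipf n w w = 1" using normalize_vec[OF False] by blast
        have "restr n (\<lambda>i. c * w i) \<in> K" unfolding K_def using c(2) by (auto simp: restr_def ipf_def)
        hence "bil A n (restr n (\<lambda>i. c * w i)) (restr n (\<lambda>i. c * w i)) \<le> bil A n u u" using umax by blast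
        hence "c * c * bil A n w w \<le> bil A n u u"
          by (simp add: bil_scale_left bil_scale_right)
        hence "c * c * bil A n w w * ipf n w w \<le> bil A n u u * ipf n w w"
          using ipf_nonneg[of n w] by (simp add: mult_right_mono)
        moreover have "c * c * bil A n w w * ipf n w w = (c * c * ipf n w w) * bil A n w w"
          by (simp add: algebra_simps)
        ultimately show ?thesis using c(3) by simp
      qed
    qed
  qed
qed

lemma mv_vec: fixes A :: "real mat" and v :: "real vec" assumes "A \<in> carrier_mat n n" "v \<in> carrier_vec n" "i < n"
  shows "(A *\<^sub>v v) $ i = mvf A n (\<lambda>j. v $ j) i"
  using assms unfolding mvf_def by (simp add: scalar_prod_def atLeast0LessThan)

lemma sp_vec: fixes v w :: "real vec" shows "dim_vec w = n \<Longrightarrow> v \<bullet> w = ipf n (\<lambda>i. v $ i) (\<lambda>i. w $ i)"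
  unfolding scalar_prod_def ipf_def by (simp add: atLeast0LessThan)

lemma quad_vec: fixes A :: "real mat" and v :: "real vec" assumes "A \<in> carrier_mat n n" "v \<in> carrier_vec n"
  shows "v \<bullet> (A *\<^sub>v v) = bil A n (\<lambda>i. v $ i) (\<lambda>i. v $ i)"
proof -
  have "v \<bullet> (A *\<^sub>v v) = ipf n (\<lambda>i. v $ i) (\<lambda>i. (A *\<^sub>v v) $ i)"
    using assms by (intro sp_vec) simp
  also have "\<dots> = ipf n (\<lambda>i. v $ i) (mvf A n (\<lambda>j. v $ j))"
    unfolding ipf_def using mv_vec[OF assms] by simp
  finally show ?thesis by (simp add: bil_mvf)
qed

lemma eigvec_fun: fixes A :: "real mat" and v :: "real vec" assumes A: "A \<in> carrier_mat n n" and ev: "eigenvector A v k"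
  shows "v \<in> carrier_vec n" "\<exists>i<n. v $ i \<noteq> 0" "\<forall>i<n. mvf A n (\<lambda>j. v $ j) i = k * v $ i"
proof -
  show v: "v \<in> carrier_vec n" using ev A unfolding eigenvector_def by auto
  show "\<exists>i<n. v $ i \<noteq> 0"
  proof (rule ccontr)
    assume "\<not> (\<exists>i<n. v $ i \<noteq> 0)"
    hence "v = 0\<^sub>v n" using v by (intro eq_vecI) auto
    then show False using ev A unfolding eigenvector_def by auto
  qed
  show "\<forall>i<n. mvf A n (\<lambda>j. v $ j) i = k * v $ i"
  proof (intro allI impI)
    fix i assume i: "i < n"
    have "(A *\<^sub>v v) $ i = (k \<cdot>\<^sub>v v) $ i" using ev unfolding eigenvector_def by simp
    then show "mvf A n (\<lambda>j. v $ j) i = k * v $ i" using mv_vec[OF A v i] i v by simp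
  qed
qed

lemma fun_eigvec: fixes A :: "real mat" assumes A: "A \<in> carrier_mat n n"
  and eq: "\<forall>i<n. mvf A n u i = k * u i" and i: "i < n" "u i \<noteq> 0"
  shows "eigenvector A (vec n u) k"
  unfolding eigenvector_def
proof (intro conjI)
  show "vec n u \<in> carrier_vec (dim_row A)" using A by simp
  show "vec n u \<noteq> 0\<^sub>v (dim_row A)"
  proof
    assume "vec n u = 0\<^sub>v (dim_row A)"
    hence "vec n u $ i = 0\<^sub>v (dim_row A) $ i" by simp
    then show False using i A by simp
  qed
  show "A *\<^sub>v vec n u = k \<cdot>\<^sub>v vec n u"
  proof (rule eq_vecI)
    fix j assume j: "j < dim_vec (k \<cdot>\<^sub>v vec n u)"
    hence j': "j < n" by simp
    have "(A *\<^sub>v vec n u) $ j = mvf A n (\<lambda>l. vec n u $ l) j" by (rule mv_vec[OF A _ j']) simp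
    also have "\<dots> = mvf A n u j" unfolding mvf_def by (intro sum.cong) auto
    finally show "(A *\<^sub>v vec n u) $ j = (k \<cdot>\<^sub>v vec n u) $ j" using eq j' by simp
  qed (use A in simp)
qed

lemma finite_eig: assumes A: "(A :: real mat) \<in> carrier_mat n n" shows "finite {k. eigenvalue A k}"
proof -
  have "coeff (char_poly A) n = 1" using degree_monic_char_poly[OF A] by simp
  hence "char_poly A \<noteq> 0" by auto
  hence "finite {k. poly (char_poly A) k = 0}" by (rule poly_roots_finite)
  then show ?thesis using eigenvalue_root_char_poly[OF A] by simp
qed

lemma lmax_props: fixes A :: "real mat" assumes A: "A \<in> carrier_mat n n" and S: "symm A n" and n: "0 < n"
  shows "eigenvalue A (lambda_max A)" "\<forall>w. bil A n w w \<le> lambda_max A * ipf n w w"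
    "\<And>k. eigenvalue A k \<Longrightarrow> k \<le> lambda_max A"
proof -
  obtain u where u1: "ipf n u u = 1" and ub: "\<forall>w. bil A n w w \<le> bil A n u u * ipf n w w"
    using rayleigh_max[OF n] by blast
  define m where "m = bil A n u u"
  have eq: "\<forall>i<n. mvf A n u i = m * u i"
    using lagrange[OF S _ ub[folded m_def]] u1 unfolding m_def by simp
  have "\<exists>i<n. u i \<noteq> 0"
  proof (rule ccontr)
    assume "\<not> (\<exists>i<n. u i \<noteq> 0)"
    hence "ipf n u u = 0" unfolding ipf_def by simp
    with u1 show False by simp
  qed
  then obtain i where i: "i < n" "u i \<noteq> 0" by blast
  have evm: "eigenvalue A m" unfolding eigenvalue_def using fun_eigvec[OF A eq i] by blast
  have fin: "finite {k. eigenvalue A k}" by (rule finite_eig[OF A])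
  have ne: "{k. eigenvalue A k} \<noteq> {}" using evm by auto
  show "eigenvalue A (lambda_max A)" unfolding lambda_max_def using Max_in[OF fin ne] by simp
  show le: "\<And>k. eigenvalue A k \<Longrightarrow> k \<le> lambda_max A" unfolding lambda_max_def using fin by simp
  show "\<forall>w. bil A n w w \<le> lambda_max A * ipf n w w"
  proof
    fix w
    have "bil A n w w \<le> m * ipf n w w" using ub m_def by simp
    also have "\<dots> \<le> lambda_max A * ipf n w w" using le[OF evm] ipf_nonneg[of n w] by (simp add: mult_right_mono)
    finally show "bil A n w w \<le> lambda_max A * ipf n w w" .
  qed
qed

lemma bil_zero: "ipf n r r = 0 \<Longrightarrow> bil A n r r = 0"
  unfolding bil_def using ipf_zero[of n r] by simp

lemma abs_prod_le: fixes x y R :: real assumes "x * x \<le> R" "y * y \<le> R" shows "\<bar>x * y\<bar> \<le> R"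
proof -
  have "0 \<le> (\<bar>x\<bar> - \<bar>y\<bar>) * (\<bar>x\<bar> - \<bar>y\<bar>)" by simp
  hence "2 * (\<bar>x\<bar> * \<bar>y\<bar>) \<le> \<bar>x\<bar> * \<bar>x\<bar> + \<bar>y\<bar> * \<bar>y\<bar>" by (simp add: algebra_simps)
  also have "\<dots> = x * x + y * y" by (simp add: abs_mult_self_eq)
  finally show ?thesis using assms by (simp add: abs_mult)
qed

lemma bil_abs_bound:
  "\<bar>bil B n r r\<bar> \<le> (\<Sum>i<n. \<Sum>j<n. \<bar>B $$ (i, j)\<bar>) * ipf n r r"
proof -
  have "\<bar>bil B n r r\<bar> \<le> (\<Sum>i<n. \<bar>\<Sum>j<n. r i * B $$ (i, j) * r j\<bar>)"
    unfolding bil_def by (rule sum_abs)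
  also have "\<dots> \<le> (\<Sum>i<n. \<Sum>j<n. \<bar>r i * B $$ (i, j) * r j\<bar>)"
    by (intro sum_mono sum_abs)
  also have "\<dots> \<le> (\<Sum>i<n. \<Sum>j<n. \<bar>B $$ (i, j)\<bar> * ipf n r r)"
  proof (intro sum_mono)
    fix i j assume i: "i \<in> {..<n}" and j: "j \<in> {..<n}"
    have "\<bar>r i * r j\<bar> \<le> ipf n r r"
      using i j by (intro abs_prod_le sq_le_ipf) auto
    hence "\<bar>B $$ (i, j)\<bar> * \<bar>r i * r j\<bar> \<le> \<bar>B $$ (i, j)\<bar> * ipf n r r"
      by (intro mult_left_mono) auto
    then show "\<bar>r i * B $$ (i, j) * r j\<bar> \<le> \<bar>B $$ (i, j)\<bar> * ipf n r r"
      by (simp add: abs_mult algebra_simps)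
  qed
  also have "\<dots> = (\<Sum>i<n. \<Sum>j<n. \<bar>B $$ (i, j)\<bar>) * ipf n r r"
    by (simp add: sum_distrib_right)
  finally show ?thesis .
qed

lemma amgm_ipf: fixes a \<delta> :: real assumes d: "\<delta> > 0"
  shows "2 * a * ipf n r z \<le> \<delta> * (a * a) * ipf n z z + ipf n r r / \<delta>"
proof -
  have "2 * a * ipf n r z = (\<Sum>i<n. 2 * a * (r i * z i))" unfolding ipf_def by (simp add: sum_distrib_left)
  also have "\<dots> \<le> (\<Sum>i<n. \<delta> * (a * a) * (z i * z i) + r i * r i / \<delta>)"
  proof (intro sum_mono)
    fix i
    have "0 \<le> (\<delta> * a * z i - r i) * (\<delta> * a * z i - r i) / \<delta>" using d by simp
    also have "(\<delta> * a * z i - r i) * (\<delta> * a * z i - r i) / \<delta>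
        = \<delta> * (a * a) * (z i * z i) + r i * r i / \<delta> - 2 * a * (r i * z i)"
      using d by (simp add: field_simps)
    finally show "2 * a * (r i * z i) \<le> \<delta> * (a * a) * (z i * z i) + r i * r i / \<delta>" by simp
  qed
  also have "\<dots> = \<delta> * (a * a) * ipf n z z + ipf n r r / \<delta>"
    unfolding ipf_def by (simp add: sum.distrib sum_distrib_left sum_divide_distrib)
  finally show ?thesis .
qed

lemma gap:
  fixes A :: "real mat"
  assumes A: "A \<in> carrier_mat n n" and S: "symm A n" and n: "0 < n"
    and v1: "ipf n v v = 1" and lam: "lam = lambda_max A"
    and simple: "\<And>u. \<forall>i<n. mvf A n u i = lam * u i \<Longrightarrow> \<exists>c. \<forall>i<n. u i = c * v i"
  shows "\<exists>g>0. \<forall>r. ipf n v r = 0 \<longrightarrow> g * ipf n r r \<le> lam * ipf n r r - bil A n r r"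
proof -
  have bound: "\<forall>w. bil A n w w \<le> lam * ipf n w w" using lmax_props(2)[OF A S n] lam by simp
  define K where "K = {u::nat \<Rightarrow> real. (\<forall>i. n \<le> i \<longrightarrow> u i = 0) \<and> ipf n u u = 1 \<and> ipf n v u = 0}"
  have cK: "compact K" unfolding K_def by (rule compact_sph)
  have norm_in: "restr n (\<lambda>i. c * r i) \<in> K"
    if "ipf n v r = 0" "ipf n (restr n (\<lambda>i. c * r i)) (restr n (\<lambda>i. c * r i)) = 1" for c r
    unfolding K_def using that by (auto simp: restr_def ipf_scale_right)
  define f where "f = (\<lambda>u. lam * ipf n u u - bil A n u u)"
  have key: "g * ipf n r r \<le> f r"
    if gK: "\<forall>u\<in>K. g \<le> f u" and rv: "ipf n v r = 0" for g r
  proof (cases "ipf n r r = 0")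
    case True then show ?thesis by (simp add: f_def bil_zero)
  next
    case False
    obtain c where c: "c > 0" "ipf n (restr n (\<lambda>i. c * r i)) (restr n (\<lambda>i. c * r i)) = 1"
      "c * c * ipf n r r = 1" using normalize_vec[OF False] by blast
    have "g \<le> f (restr n (\<lambda>i. c * r i))" using gK norm_in[OF rv c(2)] by blast
    also have "\<dots> = c * c * f r" unfolding f_def
      by (simp add: bil_scale_left bil_scale_right ipf_scale_left ipf_scale_right algebra_simps)
    finally have "g * (c * c * ipf n r r) \<le> c * c * f r" using c(3) by simp
    hence "c * c * (g * ipf n r r) \<le> c * c * f r" by (simp add: algebra_simps)
    then show ?thesis using c(1) by (simp add: mult_le_cancel_left)
  qed
  show ?thesis
  proof (cases "K = {}")
    case True
    have "\<forall>u\<in>K. 1 \<le> f u" using True by simp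
    hence "\<forall>r. ipf n v r = 0 \<longrightarrow> 1 * ipf n r r \<le> f r" using key by blast
    then show ?thesis unfolding f_def by (intro exI[of _ 1]) auto
  next
    case False
    have cf: "continuous_on K f" unfolding f_def
      by (rule continuous_on_subset[OF _ subset_UNIV])
        (intro continuous_intros cont_ipf cont_bil continuous_on_product_coordinates)
    obtain u2 where u2: "u2 \<in> K" and umin: "\<forall>y\<in>K. f u2 \<le> f y"
      using continuous_attains_inf[OF cK False cf] by blast
    have u21: "ipf n u2 u2 = 1" and u2v: "ipf n v u2 = 0" using u2 unfolding K_def by auto
    have pos: "f u2 > 0"
    proof (rule ccontr)
      assume "\<not> f u2 > 0"
      moreover have "bil A n u2 u2 \<le> lam * ipf n u2 u2" using bound by blast
      hence "f u2 \<ge> 0" unfolding f_def by simp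
      ultimately have "f u2 = 0" by simp
      hence eq: "bil A n u2 u2 = lam * ipf n u2 u2" unfolding f_def by simp
      have "\<forall>i<n. mvf A n u2 i = lam * u2 i" using lagrange[OF S _ bound eq] by blast
      then obtain c where c: "\<forall>i<n. u2 i = c * v i" using simple by blast
      have "ipf n v u2 = c * ipf n v v" unfolding ipf_def using c by (simp add: sum_distrib_left algebra_simps)
      hence "c = 0" using u2v v1 by simp
      hence "ipf n u2 u2 = 0" unfolding ipf_def using c by simp
      then show False using u21 by simp
    qed
    show ?thesis using key[OF umin] pos unfolding f_def by blast
  qed
qed

lemma ipf_mvf_eig: assumes "\<forall>i<n. mvf A n v i = lam * v i"
  shows "ipf n r (mvf A n v) = lam * ipf n r v"
proof -
  have "ipf n r (mvf A n v) = ipf n r (\<lambda>i. lam * v i)" unfolding ipf_def using assms by (intro sum.cong) auto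
  then show ?thesis by (simp add: ipf_scale_right)
qed

lemma core:
  fixes M0 B :: "real mat" and Mt :: "real \<Rightarrow> real mat"
  assumes M0: "M0 \<in> carrier_mat n n" and S0: "symm M0 n" and n: "0 < n"
    and Mt: "\<And>t. Mt t \<in> carrier_mat n n" and St: "\<And>t. symm (Mt t) n"
    and v1: "ipf n v v = 1" and eig: "\<forall>i<n. mvf M0 n v i = lam * v i" and lam: "lam = lambda_max M0"
    and simple: "\<And>u. \<forall>i<n. mvf M0 n u i = lam * u i \<Longrightarrow> \<exists>c. \<forall>i<n. u i = c * v i"
    and beta: "bil B n v v < 0"
    and dom: "\<And>t w. 0 < t \<Longrightarrow> t \<le> 1 \<Longrightarrow> bil (Mt t) n w w \<le> bil M0 n w w + t * bil B n w w"
    and symB: "symm B n"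
  shows "\<exists>t. 0 < t \<and> t \<le> 1 \<and> lambda_max (Mt t) < lam"
proof -
  obtain g where g: "g > 0" and gapr: "\<forall>r. ipf n v r = 0 \<longrightarrow> g * ipf n r r \<le> lam * ipf n r r - bil M0 n r r"
    using gap[OF M0 S0 n v1 lam simple] by blast
  define \<beta> where "\<beta> = bil B n v v"
  define Kc where "Kc = (\<Sum>i<n. \<Sum>j<n. \<bar>B $$ (i, j)\<bar>)"
  define L where "L = ipf n (mvf B n v) (mvf B n v)"
  define \<delta> where "\<delta> = - \<beta> / (2 * (L + 1))"
  define C where "C = 1 / \<delta> + Kc"
  define t where "t = min 1 (g / (2 * C))"
  have b: "\<beta> < 0" using beta \<beta>_def by simp
  have L0: "L \<ge> 0" unfolding L_def by (rule ipf_nonneg)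
  have K0: "Kc \<ge> 0" unfolding Kc_def by (intro sum_nonneg) auto
  have d0: "\<delta> > 0" unfolding \<delta>_def using b L0 by (intro divide_pos_pos) auto
  have dL: "\<delta> * L \<le> - \<beta> / 2"
  proof -
    have "\<delta> * L = - \<beta> / 2 * (L / (L + 1))" unfolding \<delta>_def using L0 by (simp add: field_simps)
    also have "\<dots> \<le> - \<beta> / 2 * 1" using b L0 by (intro mult_left_mono) auto
    finally show ?thesis by simp
  qed
  have "1 / \<delta> > 0" using d0 by simp
  hence C0: "C > 0" unfolding C_def using K0 by linarith
  have t0: "t > 0" unfolding t_def using g C0 by simp
  have t1: "t \<le> 1" unfolding t_def by simp
  have tC: "t * C \<le> g / 2"
  proof -
    have "t \<le> g / (2 * C)" unfolding t_def by simp
    hence "t * C \<le> g / (2 * C) * C" using C0 by (intro mult_right_mono) auto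
    also have "\<dots> = g / 2" using C0 by simp
    finally show ?thesis .
  qed
  have "lambda_max (Mt t) < lam"
  proof (rule ccontr)
    assume "\<not> lambda_max (Mt t) < lam"
    hence mu: "lam \<le> lambda_max (Mt t)" by simp
    define \<mu> where "\<mu> = lambda_max (Mt t)"
    have "eigenvalue (Mt t) \<mu>" unfolding \<mu>_def by (rule lmax_props(1)[OF Mt St n])
    then obtain wv where wv: "eigenvector (Mt t) wv \<mu>" unfolding eigenvalue_def by blast
    define w where "w = (\<lambda>i. wv $ i)"
    have wnz: "\<exists>i<n. w i \<noteq> 0" and weq: "\<forall>i<n. mvf (Mt t) n w i = \<mu> * w i"
      using eigvec_fun[OF Mt wv] unfolding w_def by auto
    define N where "N = ipf n w w"
    have N0: "N > 0"
    proof -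
      have "N \<noteq> 0" using wnz ipf_zero[of n w] unfolding N_def by blast
      then show ?thesis using ipf_nonneg[of n w] unfolding N_def by linarith
    qed
    have bilt: "bil (Mt t) n w w = \<mu> * N" unfolding N_def bil_mvf using ipf_mvf_eig[OF weq] by simp
    define a where "a = ipf n v w"
    define r where "r = (\<lambda>i. w i - a * v i)"
    have w_eq: "w = (\<lambda>i. a * v i + r i)" unfolding r_def by auto
    have r_eq: "r = (\<lambda>i. w i + (- a) * v i)" unfolding r_def by auto
    have vr: "ipf n v r = 0" unfolding r_eq ipf_add_right ipf_scale_right using v1 a_def by simp
    have rv: "ipf n r v = 0" using vr ipf_comm by metis
    define R where "R = ipf n r r"
    have R0: "R \<ge> 0" unfolding R_def by (rule ipf_nonneg)
    have Neq: "N = a * a + R"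
      unfolding N_def R_def w_eq ipf_quad_expand by (simp add: ipf_scale_left ipf_scale_right v1 vr)
    have bM0: "bil M0 n w w = a * a * lam + bil M0 n r r"
    proof -
      have vv: "bil M0 n v v = lam" using ipf_mvf_eig[OF eig, of v] v1 by (simp add: bil_mvf)
      have vr': "bil M0 n v r = 0" using bil_sym[OF S0, of v r] ipf_mvf_eig[OF eig, of r] rv
        by (simp add: bil_mvf)
      show ?thesis unfolding w_eq bil_quad_expand[OF S0]
        by (simp add: bil_scale_left bil_scale_right vv vr')
    qed
    define X where "X = ipf n r (mvf B n v)"
    have bB: "bil B n w w = a * a * \<beta> + 2 * a * X + bil B n r r"
    proof -
      have vr': "bil B n v r = X" using bil_sym[OF symB, of v r] unfolding X_def by (simp add: bil_mvf)
      show ?thesis unfolding w_eq bil_quad_expand[OF symB]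
        by (simp add: bil_scale_left bil_scale_right vr' \<beta>_def algebra_simps)
    qed
    have gapR: "g * R \<le> lam * R - bil M0 n r r" using gapr vr unfolding R_def by blast
    have hX: "2 * a * X \<le> \<delta> * (a * a) * L + R / \<delta>"
      unfolding X_def L_def R_def by (rule amgm_ipf[OF d0])
    have hY: "bil B n r r \<le> Kc * R"
      using bil_abs_bound[of B n r] unfolding Kc_def R_def by linarith
    have h2: "\<mu> * N \<le> bil M0 n w w + t * bil B n w w" using dom[OF t0 t1, of w] bilt by simp
    have h1: "lam * N \<le> \<mu> * N" using mu N0 unfolding \<mu>_def by (simp add: mult_right_mono)
    have s1: "g * R \<le> t * (a * a * \<beta> + 2 * a * X + bil B n r r)"
      using h1 h2 gapR bM0 bB Neq by (simp add: algebra_simps)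
    have s2: "a * a * \<beta> + 2 * a * X + bil B n r r \<le> a * a * \<beta> / 2 + C * R"
    proof -
      have "\<delta> * (a * a) * L \<le> - \<beta> / 2 * (a * a)"
        using mult_right_mono[OF dL, of "a * a"] by (simp add: algebra_simps)
      moreover have "R / \<delta> + Kc * R = C * R" unfolding C_def by (simp add: algebra_simps)
      ultimately show ?thesis using hX hY by (simp add: algebra_simps)
    qed
    have s3: "g * R \<le> t * (a * a * \<beta>) / 2 + (t * C) * R"
      using order_trans[OF s1 mult_left_mono[OF s2]] t0 by (simp add: algebra_simps)
    have s4: "(t * C) * R \<le> g / 2 * R" using tC R0 by (rule mult_right_mono)
    have aa: "a * a \<ge> 0" by simp
    have s5: "t * (a * a * \<beta>) \<le> 0"
      using t0 b aa by (simp add: mult_nonneg_nonpos mult_nonneg_nonneg mult_le_0_iff)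
    have s6: "g / 2 * R \<le> t * (a * a * \<beta>) / 2" using s3 s4 by simp
    have gR: "0 \<le> g / 2 * R" using g R0 by simp
    have ab: "t * (a * a * \<beta>) = 0" using s6 s5 gR by linarith
    have "g / 2 * R \<le> 0" using s6 ab by simp
    hence "R \<le> 0" using g by (simp add: mult_le_0_iff)
    hence R00: "R = 0" using R0 by simp
    have "a * a = 0" using ab t0 b by simp
    then show False using Neq R00 N0 by simp
  qed
  then show ?thesis using t0 t1 by blast
qed

definition Yf :: "nat pmf \<Rightarrow> nat pmf \<Rightarrow> nat \<Rightarrow> nat \<times> bool \<Rightarrow> real" where
  "Yf PT PC k = (\<lambda>(s, d). surv PT k * xi PT PC k s d)"

lemma Sigma_cond_idx:
  assumes "i < Suc tmax" "j < Suc tmax"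
  shows "Sigma_cond tmax PT PC $$ (i, j) =
    measure_pmf.expectation (obs_pmf PT PC) (\<lambda>ob. Yf PT PC i ob * Yf PT PC j ob)
    - measure_pmf.expectation (obs_pmf PT PC) (Yf PT PC i) * measure_pmf.expectation (obs_pmf PT PC) (Yf PT PC j)"
  using assms unfolding Sigma_cond_def Yf_def by (simp add: Let_def)

lemma Sigma_cond_carrier: "Sigma_cond tmax PT PC \<in> carrier_mat (Suc tmax) (Suc tmax)"
  unfolding Sigma_cond_def by simp

lemma Sigma_cond_symm: "symm (Sigma_cond tmax PT PC) (Suc tmax)"
  unfolding symm_def by (simp add: Sigma_cond_idx mult.commute)

lemma Yf_bound: "\<exists>B. \<forall>ob. \<bar>Yf PT PC k ob\<bar> \<le> B"
proof -
  define B where "B = \<bar>surv PT k\<bar> * (\<Sum>i\<le>k. (1 + \<bar>hazS PT PC i\<bar>) / \<bar>surv PT i * censGm PT PC i\<bar>)"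
  have "\<bar>Yf PT PC k (s, d)\<bar> \<le> B" for s d
  proof -
    have "\<bar>xi PT PC k s d\<bar> \<le> (\<Sum>i\<le>k. (1 + \<bar>hazS PT PC i\<bar>) / \<bar>surv PT i * censGm PT PC i\<bar>)"
      unfolding xi_def
    proof (rule order_trans[OF sum_abs], intro sum_mono)
      fix i
      have num: "\<bar>(if s = i \<and> d then 1 else 0) - (if i \<le> s then 1 else 0) * hazS PT PC i\<bar> \<le> 1 + \<bar>hazS PT PC i\<bar>"
        by (auto split: if_splits)
      show "\<bar>((if s = i \<and> d then 1 else 0) - (if i \<le> s then 1 else 0) * hazS PT PC i) /
             (surv PT i * censGm PT PC i)\<bar> \<le> (1 + \<bar>hazS PT PC i\<bar>) / \<bar>surv PT i * censGm PT PC i\<bar>"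
        unfolding abs_divide by (rule divide_right_mono[OF num]) simp
    qed
    then show ?thesis unfolding Yf_def B_def by (simp add: abs_mult mult_left_mono)
  qed
  then show ?thesis by auto
qed

lemma integrable_pmf_bounded:
  fixes f :: "'a \<Rightarrow> real"
  assumes "\<forall>ob. \<bar>f ob\<bar> \<le> B" shows "integrable (measure_pmf p) f"
  by (rule measure_pmf.integrable_const_bound[where B=B]) (use assms in auto)

lemma Yf_integrable: "integrable (measure_pmf p) (\<lambda>ob. c * Yf PT PC k ob)"
proof -
  obtain B where B: "\<forall>ob. \<bar>Yf PT PC k ob\<bar> \<le> B" using Yf_bound by blast
  have "\<forall>ob. \<bar>c * Yf PT PC k ob\<bar> \<le> \<bar>c\<bar> * B" using B by (simp add: abs_mult mult_left_mono)
  then show ?thesis by (rule integrable_pmf_bounded)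
qed

lemma Yf_integrable1: "integrable (measure_pmf p) (Yf PT PC k)"
  using Yf_integrable[of p 1 PT PC k] by simp

lemma Yf_integrable2: "integrable (measure_pmf p) (\<lambda>ob. c * Yf PT PC k ob * (c' * Yf PT PC k' ob))"
proof -
  obtain B where B: "\<forall>ob. \<bar>Yf PT PC k ob\<bar> \<le> B" using Yf_bound by blast
  obtain B' where B': "\<forall>ob. \<bar>Yf PT PC k' ob\<bar> \<le> B'" using Yf_bound by blast
  have "\<forall>ob. \<bar>c * Yf PT PC k ob * (c' * Yf PT PC k' ob)\<bar> \<le> (\<bar>c\<bar> * B) * (\<bar>c'\<bar> * B')"
  proof
    fix ob
    have "\<bar>Yf PT PC k ob\<bar> \<le> B" using B by blast
    hence h1: "\<bar>c * Yf PT PC k ob\<bar> \<le> \<bar>c\<bar> * B" by (simp add: abs_mult mult_left_mono)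
    have "\<bar>Yf PT PC k' ob\<bar> \<le> B'" using B' by blast
    hence h2: "\<bar>c' * Yf PT PC k' ob\<bar> \<le> \<bar>c'\<bar> * B'" by (simp add: abs_mult mult_left_mono)
    have "\<bar>c * Yf PT PC k ob\<bar> * \<bar>c' * Yf PT PC k' ob\<bar> \<le> (\<bar>c\<bar> * B) * (\<bar>c'\<bar> * B')"
      by (rule mult_mono[OF h1 h2]) (use h1 in auto)
    then show "\<bar>c * Yf PT PC k ob * (c' * Yf PT PC k' ob)\<bar> \<le> (\<bar>c\<bar> * B) * (\<bar>c'\<bar> * B')"
      by (simp add: abs_mult)
  qed
  then show ?thesis by (rule integrable_pmf_bounded)
qed

lemma Sigma_cond_psd: "0 \<le> bil (Sigma_cond tmax PT PC) (Suc tmax) u u"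
proof -
  define n where "n = Suc tmax"
  define p where "p = obs_pmf PT PC"
  define Y where "Y = Yf PT PC"
  define Z where "Z = (\<lambda>ob. \<Sum>i<n. u i * Y i ob)"
  have iZ: "integrable (measure_pmf p) Z" unfolding Z_def Y_def by (rule Bochner_Integration.integrable_sum) (rule Yf_integrable)
  have ZZ: "(\<lambda>ob. (Z ob)\<^sup>2) = (\<lambda>ob. \<Sum>i<n. \<Sum>j<n. u i * Y i ob * (u j * Y j ob))"
    unfolding Z_def power2_eq_square by (simp add: sum_product)
  have iZ2: "integrable (measure_pmf p) (\<lambda>ob. (Z ob)\<^sup>2)" unfolding ZZ Y_def
    by (intro Bochner_Integration.integrable_sum Yf_integrable2)
  have EZ: "measure_pmf.expectation p Z = (\<Sum>i<n. u i * measure_pmf.expectation p (Y i))"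
    unfolding Z_def Y_def by (subst Bochner_Integration.integral_sum) (auto intro: Yf_integrable simp: Yf_integrable1)
  have EZ2: "measure_pmf.expectation p (\<lambda>ob. (Z ob)\<^sup>2) =
      (\<Sum>i<n. \<Sum>j<n. u i * u j * measure_pmf.expectation p (\<lambda>ob. Y i ob * Y j ob))"
    unfolding ZZ Y_def
    by (subst Bochner_Integration.integral_sum, intro Bochner_Integration.integrable_sum Yf_integrable2, intro sum.cong refl,
        subst Bochner_Integration.integral_sum, intro Yf_integrable2, intro sum.cong refl)
       (simp add: mult.assoc mult.left_commute)
  have "bil (Sigma_cond tmax PT PC) (Suc tmax) u u =
      (\<Sum>i<n. \<Sum>j<n. u i * u j * measure_pmf.expectation p (\<lambda>ob. Y i ob * Y j ob))
      - (\<Sum>i<n. u i * measure_pmf.expectation p (Y i)) * (\<Sum>j<n. u j * measure_pmf.expectation p (Y j))"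
    unfolding bil_def n_def[symmetric] sum_product sum_subtractf[symmetric]
    by (intro sum.cong refl) (simp add: Sigma_cond_idx n_def p_def Y_def algebra_simps)
  also have "\<dots> = measure_pmf.variance p Z"
    by (subst measure_pmf.variance_eq[OF iZ iZ2]) (simp only: EZ EZ2, simp add: power2_eq_square)
  also have "\<dots> \<ge> 0" by (rule measure_pmf.variance_positive)
  finally show ?thesis .
qed

lemma integrable_div_pol:
  fixes f g :: "'x \<Rightarrow> real"
  assumes f: "integrable M f" and g: "g \<in> borel_measurable M" and a: "\<alpha> > 0"
    and ga: "\<forall>x\<in>space M. \<alpha> \<le> g x"
  shows "integrable M (\<lambda>x. f x / g x)"
proof (rule Bochner_Integration.integrable_bound[of M "\<lambda>x. f x / \<alpha>"])
  show "integrable M (\<lambda>x. f x / \<alpha>)" using f by simp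
  show "(\<lambda>x. f x / g x) \<in> borel_measurable M" by (intro borel_measurable_divide borel_measurable_integrable[OF f] g)
  show "AE x in M. norm (f x / g x) \<le> norm (f x / \<alpha>)"
  proof (rule AE_I2)
    fix x assume x: "x \<in> space M"
    have "\<alpha> \<le> g x" using ga x by blast
    hence "\<bar>f x\<bar> / \<bar>g x\<bar> \<le> \<bar>f x\<bar> / \<alpha>" using a by (simp add: frac_le)
    then show "norm (f x / g x) \<le> norm (f x / \<alpha>)" using a by (simp add: abs_divide)
  qed
qed

lemma Sigma_eff_carrier: "Sigma_eff tmax PX QT QC \<pi> \<in> carrier_mat (Suc tmax) (Suc tmax)"
  unfolding Sigma_eff_def by simp

lemma Sigma_eff_idx: "i < Suc tmax \<Longrightarrow> j < Suc tmax \<Longrightarrow> Sigma_eff tmax PX QT QC \<pi> $$ (i, j) =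
     (\<integral>x. Sigma_cond tmax (QT x True) (QC x True) $$ (i, j) / \<pi> x
         + Sigma_cond tmax (QT x False) (QC x False) $$ (i, j) / (1 - \<pi> x) \<partial>PX)
     + (\<integral>x. bvec PX QT x i * bvec PX QT x j \<partial>PX)"
  unfolding Sigma_eff_def by simp

lemma Sigma_eff_symm: "symm (Sigma_eff tmax PX QT QC \<pi>) (Suc tmax)"
  unfolding symm_def
proof (intro allI impI)
  fix i j assume i: "i < Suc tmax" and j: "j < Suc tmax"
  have e1: "(\<lambda>x. Sigma_cond tmax (QT x True) (QC x True) $$ (i, j) / \<pi> x
         + Sigma_cond tmax (QT x False) (QC x False) $$ (i, j) / (1 - \<pi> x)) =
       (\<lambda>x. Sigma_cond tmax (QT x True) (QC x True) $$ (j, i) / \<pi> x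
         + Sigma_cond tmax (QT x False) (QC x False) $$ (j, i) / (1 - \<pi> x))"
  proof -
    have h: "\<And>x b. Sigma_cond tmax (QT x b) (QC x b) $$ (i, j) = Sigma_cond tmax (QT x b) (QC x b) $$ (j, i)"
      using Sigma_cond_symm i j unfolding symm_def by blast
    show ?thesis by (simp only: h)
  qed
  have e2: "(\<lambda>x. bvec PX QT x i * bvec PX QT x j) = (\<lambda>x. bvec PX QT x j * bvec PX QT x i)"
    by (simp add: mult.commute)
  show "Sigma_eff tmax PX QT QC \<pi> $$ (i, j) = Sigma_eff tmax PX QT QC \<pi> $$ (j, i)"
    unfolding Sigma_eff_idx[OF i j] Sigma_eff_idx[OF j i] e1 e2 ..
qed

definition bconst :: "'x measure \<Rightarrow> ('x \<Rightarrow> bool \<Rightarrow> nat pmf) \<Rightarrow> nat \<Rightarrow> (nat \<Rightarrow> real) \<Rightarrow> real" where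
  "bconst PX QT n u = (\<Sum>i<n. \<Sum>j<n. u i * (\<integral>x. bvec PX QT x i * bvec PX QT x j \<partial>PX) * u j)"

lemma bil_Sigma_eff:
  fixes \<pi> :: "'x \<Rightarrow> real"
  assumes pi: "\<pi> \<in> Pi_alpha PX \<alpha>" and a: "0 < \<alpha>"
    and integrable_Sigma: "\<And>a i j. i \<le> tmax \<Longrightarrow> j \<le> tmax \<Longrightarrow>
          integrable PX (\<lambda>x. Sigma_cond tmax (QT x a) (QC x a) $$ (i, j))"
  shows "bil (Sigma_eff tmax PX QT QC \<pi>) (Suc tmax) u u =
    (\<integral>x. bil (Sigma_cond tmax (QT x True) (QC x True)) (Suc tmax) u u / \<pi> x
       + bil (Sigma_cond tmax (QT x False) (QC x False)) (Suc tmax) u u / (1 - \<pi> x) \<partial>PX)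
    + bconst PX QT (Suc tmax) u"
proof -
  define n where "n = Suc tmax"
  define g where "g = (\<lambda>i j x. Sigma_cond tmax (QT x True) (QC x True) $$ (i, j) / \<pi> x
         + Sigma_cond tmax (QT x False) (QC x False) $$ (i, j) / (1 - \<pi> x))"
  have pim: "\<pi> \<in> borel_measurable PX" and pib: "\<forall>x\<in>space PX. \<alpha> \<le> \<pi> x \<and> \<pi> x \<le> 1 - \<alpha>"
    using pi unfolding Pi_alpha_def by auto
  have ig': "integrable PX (g i j)" if "i < n" "j < n" for i j
  proof -
    have ii: "i \<le> tmax" "j \<le> tmax" using that n_def by auto
    have "integrable PX (\<lambda>x. Sigma_cond tmax (QT x True) (QC x True) $$ (i, j) / \<pi> x)"
      by (rule integrable_div_pol[OF integrable_Sigma[OF ii] pim a]) (use pib in auto)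
    moreover have "integrable PX (\<lambda>x. Sigma_cond tmax (QT x False) (QC x False) $$ (i, j) / (1 - \<pi> x))"
      by (rule integrable_div_pol[OF integrable_Sigma[OF ii] _ a]) (use pib pim in auto)
    ultimately show ?thesis unfolding g_def by (intro Bochner_Integration.integrable_add)
  qed
  have ig: "integrable PX (\<lambda>x. u i * g i j x * u j)" if "i < n" "j < n" for i j
    using ig'[OF that] by simp
  have "bil (Sigma_eff tmax PX QT QC \<pi>) n u u =
      (\<Sum>i<n. \<Sum>j<n. u i * (\<integral>x. g i j x \<partial>PX) * u j) + bconst PX QT n u"
    unfolding bil_def bconst_def sum.distrib[symmetric]
    by (intro sum.cong refl) (simp add: Sigma_eff_idx n_def g_def algebra_simps)
  also have "(\<Sum>i<n. \<Sum>j<n. u i * (\<integral>x. g i j x \<partial>PX) * u j) = (\<Sum>i<n. \<Sum>j<n. (\<integral>x. u i * g i j x * u j \<partial>PX))"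
    by (simp only: integral_mult_left_zero integral_mult_right_zero)
  also have "\<dots> = (\<Sum>i<n. \<integral>x. (\<Sum>j<n. u i * g i j x * u j) \<partial>PX)"
    by (intro sum.cong refl Bochner_Integration.integral_sum[symmetric] ig) auto
  also have "\<dots> = (\<integral>x. (\<Sum>i<n. \<Sum>j<n. u i * g i j x * u j) \<partial>PX)"
    by (intro Bochner_Integration.integral_sum[symmetric] Bochner_Integration.integrable_sum ig) auto
  also have "(\<lambda>x. (\<Sum>i<n. \<Sum>j<n. u i * g i j x * u j)) = (\<lambda>x. bil (Sigma_cond tmax (QT x True) (QC x True)) n u u / \<pi> x
       + bil (Sigma_cond tmax (QT x False) (QC x False)) n u u / (1 - \<pi> x))"
  proof
    fix x
    have "(\<Sum>i<n. \<Sum>j<n. u i * g i j x * u j) = (\<Sum>i<n. \<Sum>j<n.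
        u i * Sigma_cond tmax (QT x True) (QC x True) $$ (i, j) * u j / \<pi> x
      + u i * Sigma_cond tmax (QT x False) (QC x False) $$ (i, j) * u j / (1 - \<pi> x))"
      unfolding g_def by (intro sum.cong refl) (simp add: distrib_left distrib_right)
    then show "(\<Sum>i<n. \<Sum>j<n. u i * g i j x * u j) = bil (Sigma_cond tmax (QT x True) (QC x True)) n u u / \<pi> x
       + bil (Sigma_cond tmax (QT x False) (QC x False)) n u u / (1 - \<pi> x)"
      unfolding bil_def by (simp add: sum.distrib sum_divide_distrib)
  qed
  finally show ?thesis unfolding n_def .
qed

lemma prod_strict: fixes x1 x2 y1 y2 :: real
  assumes "0 \<le> x1" "x1 < x2" "0 \<le> y1" "y1 < y2" shows "x1 * y1 < x2 * y2"
  using assms by (intro mult_strict_mono) auto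

lemma clip_opt:
  fixes a b \<alpha> p :: real
  assumes a0: "a \<ge> 0" and b0: "b \<ge> 0" and ab: "a + b > 0" and al: "0 < \<alpha>" and al2: "\<alpha> \<le> 1 - \<alpha>"
    and p1: "\<alpha> \<le> p" and p2: "p \<le> 1 - \<alpha>" and r: "r = clip \<alpha> (a / (a + b))" and pr: "p \<noteq> r"
  shows "a * a / r + b * b / (1 - r) < a * a / p + b * b / (1 - p)"
proof -
  define c where "c = a / (a + b)"
  have ac: "a = c * (a + b)" unfolding c_def using ab by simp
  have r1: "\<alpha> \<le> r" and r2: "r \<le> 1 - \<alpha>" unfolding r clip_def using al2 by auto
  have pp: "0 < p" "0 < 1 - p" using p1 p2 al by auto
  have rr: "0 < r" "0 < 1 - r" using r1 r2 al by auto
  have key: "0 < (p - r) * (b * b * p * r - a * a * (1 - p) * (1 - r))"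
  proof (cases "c < \<alpha>")
    case True
    have rv: "r = \<alpha>" unfolding r c_def[symmetric] clip_def using True al2 by auto
    have pgt: "p > \<alpha>" using p1 pr rv by auto
    have h1: "a * (1 - \<alpha>) < b * \<alpha>"
    proof -
      have "a < \<alpha> * (a + b)" using ac True ab by (metis mult_strict_right_mono)
      then show ?thesis by (simp add: algebra_simps)
    qed
    have h2: "a * (1 - p) < b * p"
    proof -
      have "a * (1 - p) \<le> a * (1 - \<alpha>)" using a0 p1 by (intro mult_left_mono) auto
      moreover have "b * \<alpha> \<le> b * p" using b0 p1 by (intro mult_left_mono) auto
      ultimately show ?thesis using h1 by linarith
    qed
    have "a * (1 - p) * (a * (1 - \<alpha>)) < b * p * (b * \<alpha>)"
      by (rule prod_strict[OF _ h2 _ h1]) (use a0 pp al2 in auto)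
    hence "0 < b * b * p * r - a * a * (1 - p) * (1 - r)" using rv by (simp add: algebra_simps)
    then show ?thesis using pgt rv by simp
  next
    case False
    show ?thesis
    proof (cases "c > 1 - \<alpha>")
      case True
      have rv: "r = 1 - \<alpha>" unfolding r c_def[symmetric] clip_def using True al2 by auto
      have plt: "p < 1 - \<alpha>" using p2 pr rv by auto
      have h1: "b * (1 - \<alpha>) < a * \<alpha>"
      proof -
        have "(1 - \<alpha>) * (a + b) < a" using ac True ab by (metis mult_strict_right_mono)
        then show ?thesis by (simp add: algebra_simps)
      qed
      have h2: "b * p < a * (1 - p)"
      proof -
        have "b * p \<le> b * (1 - \<alpha>)" using b0 p2 by (intro mult_left_mono) auto
        moreover have "a * \<alpha> \<le> a * (1 - p)" using a0 p2 by (intro mult_left_mono) auto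
        ultimately show ?thesis using h1 by linarith
      qed
      have "b * p * (b * (1 - \<alpha>)) < a * (1 - p) * (a * \<alpha>)"
        by (rule prod_strict[OF _ h2 _ h1]) (use b0 pp al2 in auto)
      hence "b * b * p * r - a * a * (1 - p) * (1 - r) < 0" unfolding rv by (simp add: algebra_simps)
      then show ?thesis using plt rv by (simp add: mult_neg_neg)
    next
      case False2: False
      have rv: "r = c" unfolding r c_def[symmetric] clip_def using False False2 by auto
      have b: "b > 0"
      proof (rule ccontr)
        assume "\<not> b > 0"
        hence "b = 0" using b0 by simp
        hence "c = 1" unfolding c_def using ab by simp
        then show False using False2 al by simp
      qed
      have e1: "a * (1 - c) = b * c" using ac by (simp add: algebra_simps)
      have e2: "a * a * (1 - p) * (1 - c) = (a * (1 - c)) * (a * (1 - p))" by (simp add: algebra_simps)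
      have e3: "b * c * (a + b) * (p - c) = b * c * (a + b) * p - b * c * (c * (a + b))" by (simp add: algebra_simps)
      have "b * b * p * c - a * a * (1 - p) * (1 - c) = b * c * (a + b) * (p - c)"
        unfolding e2 e1 e3 ac[symmetric] by (simp add: algebra_simps)
      hence phi: "b * b * p * r - a * a * (1 - p) * (1 - r) = b * r * (a + b) * (p - r)" unfolding rv .
      have eqP: "(p - r) * (b * b * p * r - a * a * (1 - p) * (1 - r)) = (b * r * (a + b)) * ((p - r) * (p - r))"
        by (subst phi) (simp add: algebra_simps)
      have pos1: "0 < b * r * (a + b)" using b rr ab by simp
      have pos2: "0 < (p - r) * (p - r)" using pr by (metis not_real_square_gt_zero right_minus_eq)
      show ?thesis unfolding eqP using pos1 pos2 by (rule mult_pos_pos)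
    qed
  qed
  have ident: "a * a / p + b * b / (1 - p) - (a * a / r + b * b / (1 - r)) =
      (p - r) * (b * b * p * r - a * a * (1 - p) * (1 - r)) / (p * r * (1 - p) * (1 - r))"
    using pp rr by (simp add: field_simps)
  have "0 < (p - r) * (b * b * p * r - a * a * (1 - p) * (1 - r)) / (p * r * (1 - p) * (1 - r))"
    using key pp rr by simp
  then show ?thesis using ident by linarith
qed

lemma bil_minus: assumes "A \<in> carrier_mat n n" "C \<in> carrier_mat n n"
  shows "bil (A - C) n x y = bil A n x y - bil C n x y"
  unfolding bil_def using assms by (simp add: sum_subtractf[symmetric] algebra_simps)

lemma symm_minus: assumes "A \<in> carrier_mat n n" "C \<in> carrier_mat n n" "symm A n" "symm C n"
  shows "symm (A - C) n"
  using assms unfolding symm_def by simp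

lemma conv_inv:
  fixes q p r t :: real
  assumes q: "0 \<le> q" and p: "0 < p" and r: "0 < r" and t0: "0 \<le> t" and t1: "t \<le> 1"
  shows "q / ((1 - t) * p + t * r) \<le> (1 - t) * (q / p) + t * (q / r)"
proof -
  define s where "s = (1 - t) * p + t * r"
  have ps: "0 \<le> (1 - t) * p" using p t1 by simp
  have s: "s > 0"
  proof (cases "t = 0")
    case True then show ?thesis using p by (simp add: s_def)
  next
    case False
    then have "0 < t * r" using t0 r by simp
    then show ?thesis using ps by (simp add: s_def)
  qed
  have num: "(1 - t) * r * s + t * p * s - p * r = t * (1 - t) * ((p - r) * (p - r))"
    unfolding s_def by (simp add: algebra_simps)
  have fr: "(1 - t) / p + t / r - 1 / s = ((1 - t) * r * s + t * p * s - p * r) / (p * r * s)"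
    using p r s by (simp add: field_simps)
  have sq: "0 \<le> (p - r) * (p - r)" by simp
  have tt: "0 \<le> t * (1 - t)" using t0 t1 by simp
  have prs: "0 < p * r * s" using p r s by simp
  have nn: "0 \<le> (1 - t) / p + t / r - 1 / s" unfolding fr num
    by (rule divide_nonneg_pos[OF mult_nonneg_nonneg[OF tt sq] prs])
  have "(1 - t) * (q / p) + t * (q / r) - q / s = q * ((1 - t) / p + t / r - 1 / s)"
    by (simp add: algebra_simps)
  moreover have "0 \<le> q * ((1 - t) / p + t / r - 1 / s)" using q nn by simp
  ultimately show ?thesis unfolding s_def by linarith
qed

lemma integrable_bilS:
  assumes integrable_Sigma: "\<And>a i j. i \<le> tmax \<Longrightarrow> j \<le> tmax \<Longrightarrow>
          integrable PX (\<lambda>x. Sigma_cond tmax (QT x a) (QC x a) $$ (i, j))"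
  shows "integrable PX (\<lambda>x. bil (Sigma_cond tmax (QT x a) (QC x a)) (Suc tmax) u u)"
  unfolding bil_def
  by (intro Bochner_Integration.integrable_sum integrable_mult_left integrable_mult_right integrable_Sigma) auto

lemma integrable_h:
  assumes integrable_Sigma: "\<And>a i j. i \<le> tmax \<Longrightarrow> j \<le> tmax \<Longrightarrow>
          integrable PX (\<lambda>x. Sigma_cond tmax (QT x a) (QC x a) $$ (i, j))"
    and pi: "\<pi> \<in> Pi_alpha PX \<alpha>" and a: "0 < \<alpha>"
  shows "integrable PX (\<lambda>x. bil (Sigma_cond tmax (QT x True) (QC x True)) (Suc tmax) u u / \<pi> x
       + bil (Sigma_cond tmax (QT x False) (QC x False)) (Suc tmax) u u / (1 - \<pi> x))"
proof -
  have pim: "\<pi> \<in> borel_measurable PX" and pib: "\<forall>x\<in>space PX. \<alpha> \<le> \<pi> x \<and> \<pi> x \<le> 1 - \<alpha>"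
    using pi unfolding Pi_alpha_def by auto
  show ?thesis
    by (intro Bochner_Integration.integrable_add integrable_div_pol[OF integrable_bilS[OF integrable_Sigma] _ a])
       (use pim pib in auto)
qed

theorem theorem4:
  fixes tmax :: nat and PX :: "'x measure" and QT QC :: "'x \<Rightarrow> bool \<Rightarrow> nat pmf"
    and \<alpha> :: real and \<pi>E :: "'x \<Rightarrow> real"
  assumes PX: "prob_space PX"
    and alpha_pos: "0 < \<alpha>"
    and Pi_ne: "Pi_alpha PX \<alpha> \<noteq> {}"
    and meas_T: "\<And>a s. (\<lambda>x. pmf (QT x a) s) \<in> borel_measurable PX"
    and meas_C: "\<And>a s. (\<lambda>x. pmf (QC x a) s) \<in> borel_measurable PX"
    and integrable_Sigma: "\<And>a i j. i \<le> tmax \<Longrightarrow> j \<le> tmax \<Longrightarrow>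
          integrable PX (\<lambda>x. Sigma_cond tmax (QT x a) (QC x a) $$ (i, j))"
    and assm2: "AE x in PX. \<forall>a. \<forall>t\<le>tmax.
          censGm (QT x a) (QC x a) t > 0 \<and> survm (QT x a) t > 0"
    and opt: "E_optimal tmax PX QT QC \<alpha> \<pi>E"
    and simple_top: "\<And>v w. eigenvector (Sigma_eff tmax PX QT QC \<pi>E) v
                                (lambda_max (Sigma_eff tmax PX QT QC \<pi>E)) \<Longrightarrow>
                            eigenvector (Sigma_eff tmax PX QT QC \<pi>E) w
                                (lambda_max (Sigma_eff tmax PX QT QC \<pi>E)) \<Longrightarrow>
                            \<exists>c. w = c \<cdot>\<^sub>v v"
  shows "\<forall>v. eigenvector (Sigma_eff tmax PX QT QC \<pi>E) v (lambda_max (Sigma_eff tmax PX QT QC \<pi>E))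
             \<and> v \<bullet> v = 1 \<longrightarrow>
           (AE x in PX.
              let q1 = v \<bullet> (Sigma_cond tmax (QT x True) (QC x True) *\<^sub>v v);
                  q0 = v \<bullet> (Sigma_cond tmax (QT x False) (QC x False) *\<^sub>v v)
              in sqrt q1 + sqrt q0 > 0 \<longrightarrow> \<pi>E x = clip \<alpha> (sqrt q1 / (sqrt q1 + sqrt q0)))"
proof (intro allI impI)
  fix vv :: "real vec"
  assume H: "eigenvector (Sigma_eff tmax PX QT QC \<pi>E) vv (lambda_max (Sigma_eff tmax PX QT QC \<pi>E)) \<and> vv \<bullet> vv = 1"
  define n where "n = Suc tmax"
  define M0 where "M0 = Sigma_eff tmax PX QT QC \<pi>E"
  define lam where "lam = lambda_max M0"
  define v where "v = (\<lambda>i. vv $ i)"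
  define Q where "Q = (\<lambda>a x. bil (Sigma_cond tmax (QT x a) (QC x a)) n v v)"
  have n0: "0 < n" unfolding n_def by simp
  have M0c: "M0 \<in> carrier_mat n n" unfolding M0_def n_def by (rule Sigma_eff_carrier)
  have M0s: "symm M0 n" unfolding M0_def n_def by (rule Sigma_eff_symm)
  have Hev: "eigenvector M0 vv lam" using H unfolding M0_def lam_def by simp
  have vvc: "vv \<in> carrier_vec n" using eigvec_fun(1)[OF M0c Hev] .
  have eig: "\<forall>i<n. mvf M0 n v i = lam * v i" using eigvec_fun(3)[OF M0c Hev] unfolding v_def .
  have v1: "ipf n v v = 1" using H sp_vec[of vv n vv] vvc unfolding v_def by simp
  have simple: "\<exists>c. \<forall>i<n. u i = c * v i" if hu: "\<forall>i<n. mvf M0 n u i = lam * u i" for u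
  proof (cases "\<exists>i<n. u i \<noteq> 0")
    case True
    then obtain i where i: "i < n" "u i \<noteq> 0" by blast
    have "eigenvector M0 (vec n u) lam" by (rule fun_eigvec[OF M0c hu i])
    then obtain c where c: "vec n u = c \<cdot>\<^sub>v vv"
      using simple_top[OF H[THEN conjunct1]] unfolding M0_def lam_def by blast
    have "\<forall>i<n. u i = c * v i"
    proof (intro allI impI)
      fix j assume j: "j < n"
      have "vec n u $ j = (c \<cdot>\<^sub>v vv) $ j" using c by simp
      then show "u j = c * v j" using j vvc unfolding v_def by simp
    qed
    then show ?thesis by blast
  next
    case False
    then show ?thesis by (intro exI[of _ 0]) auto
  qed
  have Qeq: "vv \<bullet> (Sigma_cond tmax (QT x a) (QC x a) *\<^sub>v vv) = Q a x" for x a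
    unfolding Q_def v_def n_def by (rule quad_vec[OF Sigma_cond_carrier vvc[unfolded n_def]])
  have Q0: "0 \<le> Q a x" for a x unfolding Q_def n_def by (rule Sigma_cond_psd)
  define good where "good = (\<lambda>x. sqrt (Q True x) + sqrt (Q False x) > 0 \<longrightarrow>
      \<pi>E x = clip \<alpha> (sqrt (Q True x) / (sqrt (Q True x) + sqrt (Q False x))))"
  have "AE x in PX. good x"
  proof (rule ccontr)
    assume nAE: "\<not> (AE x in PX. good x)"
    interpret P: prob_space PX by (rule PX)
    have piE: "\<pi>E \<in> Pi_alpha PX \<alpha>" using opt unfolding E_optimal_def by blast
    have piEm: "\<pi>E \<in> borel_measurable PX" and piEb: "\<forall>x\<in>space PX. \<alpha> \<le> \<pi>E x \<and> \<pi>E x \<le> 1 - \<alpha>"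
      using piE unfolding Pi_alpha_def by auto
    obtain x0 where x0: "x0 \<in> space PX" using P.not_empty by blast
    have al2: "\<alpha> \<le> 1 - \<alpha>" using piEb x0 by force
    have Qm: "Q a \<in> borel_measurable PX" for a
      unfolding Q_def n_def by (rule borel_measurable_integrable[OF integrable_bilS[OF integrable_Sigma]])
    define pstar where "pstar = (\<lambda>x. if sqrt (Q True x) + sqrt (Q False x) > 0
        then clip \<alpha> (sqrt (Q True x) / (sqrt (Q True x) + sqrt (Q False x))) else \<pi>E x)"
    have clipb: "\<alpha> \<le> clip \<alpha> u \<and> clip \<alpha> u \<le> 1 - \<alpha>" for u unfolding clip_def using al2 by auto
    have Q1m[measurable]: "Q True \<in> borel_measurable PX" by (rule Qm)
    have Q0m[measurable]: "Q False \<in> borel_measurable PX" by (rule Qm)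
    note piEm[measurable]
    have pstarm: "pstar \<in> borel_measurable PX"
      unfolding pstar_def clip_def by measurable
    have pstarb: "\<forall>x\<in>space PX. \<alpha> \<le> pstar x \<and> pstar x \<le> 1 - \<alpha>"
      unfolding pstar_def using clipb piEb by auto
    have pstarP: "pstar \<in> Pi_alpha PX \<alpha>" unfolding Pi_alpha_def using pstarm pstarb by blast
    define h where "h = (\<lambda>(\<pi>::'x \<Rightarrow> real) x. Q True x / \<pi> x + Q False x / (1 - \<pi> x))"
    have hle: "h pstar x \<le> h \<pi>E x" and hlt: "\<not> good x \<Longrightarrow> h pstar x < h \<pi>E x" if x: "x \<in> space PX" for x
    proof -
      have "h pstar x \<le> h \<pi>E x \<and> (\<not> good x \<longrightarrow> h pstar x < h \<pi>E x)"
      proof (cases "sqrt (Q True x) + sqrt (Q False x) > 0")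
        case True
        define a where "a = sqrt (Q True x)"
        define b where "b = sqrt (Q False x)"
        have aa: "a * a = Q True x" unfolding a_def using Q0 by simp
        have bb: "b * b = Q False x" unfolding b_def using Q0 by simp
        have ps: "pstar x = clip \<alpha> (a / (a + b))" unfolding pstar_def a_def b_def using True by simp
        have a0: "0 \<le> a" and b0: "0 \<le> b" unfolding a_def b_def using Q0 by auto
        have ab: "0 < a + b" using True unfolding a_def b_def .
        have strict: "h pstar x < h \<pi>E x" if ne: "\<pi>E x \<noteq> pstar x"
        proof -
          have c1: "a * a / pstar x + b * b / (1 - pstar x) < a * a / \<pi>E x + b * b / (1 - \<pi>E x)"
            by (rule clip_opt[OF a0 b0 ab alpha_pos al2 _ _ ps ne]) (use piEb x in auto)
          then show ?thesis unfolding h_def aa bb by simp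
        qed
        have "h pstar x \<le> h \<pi>E x"
        proof (cases "\<pi>E x = pstar x")
          case True then show ?thesis by (simp add: h_def)
        qed (use strict in auto)
        moreover have "\<not> good x \<longrightarrow> h pstar x < h \<pi>E x"
          using strict True unfolding good_def pstar_def by auto
        ultimately show ?thesis by blast
      next
        case False
        then show ?thesis unfolding good_def pstar_def h_def by simp
      qed
      then show "h pstar x \<le> h \<pi>E x" "\<not> good x \<Longrightarrow> h pstar x < h \<pi>E x" by auto
    qed
    have hint: "integrable PX (h \<pi>)" if "\<pi> \<in> Pi_alpha PX \<alpha>" for \<pi>
      using integrable_h[OF integrable_Sigma that alpha_pos, where u=v] unfolding h_def Q_def n_def by simp
    define hw where "hw = (\<lambda>w (\<pi>::'x \<Rightarrow> real) x.
        bil (Sigma_cond tmax (QT x True) (QC x True)) n w w / \<pi> x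
      + bil (Sigma_cond tmax (QT x False) (QC x False)) n w w / (1 - \<pi> x))"
    have hwint: "integrable PX (hw w \<pi>)" if "\<pi> \<in> Pi_alpha PX \<alpha>" for \<pi> w
      using integrable_h[OF integrable_Sigma that alpha_pos, where u=w] unfolding hw_def n_def by simp
    have rep: "bil (Sigma_eff tmax PX QT QC \<pi>) n w w = integral\<^sup>L PX (hw w \<pi>) + bconst PX QT n w"
      if "\<pi> \<in> Pi_alpha PX \<alpha>" for \<pi> w
      using bil_Sigma_eff[OF that alpha_pos integrable_Sigma, where u=w] unfolding hw_def n_def by simp
    have hv: "hw v = h" unfolding hw_def h_def Q_def by (intro ext) simp
    define D where "D = integral\<^sup>L PX (h \<pi>E) - integral\<^sup>L PX (h pstar)"
    have Deq: "D = (\<integral>x. h \<pi>E x - h pstar x \<partial>PX)"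
      unfolding D_def by (rule Bochner_Integration.integral_diff[symmetric, OF hint[OF piE] hint[OF pstarP]])
    have Dint: "integrable PX (\<lambda>x. h \<pi>E x - h pstar x)"
      by (intro Bochner_Integration.integrable_diff hint piE pstarP)
    have Dnn: "AE x in PX. 0 \<le> h \<pi>E x - h pstar x"
      by (rule AE_I2) (use hle in auto)
    have D0: "D > 0"
    proof (rule ccontr)
      assume "\<not> D > 0"
      moreover have "D \<ge> 0" unfolding Deq using Dnn by (rule integral_nonneg_AE)
      ultimately have "D = 0" by simp
      hence "AE x in PX. h \<pi>E x - h pstar x = 0"
        using integral_nonneg_eq_0_iff_AE[OF Dint Dnn] unfolding Deq by simp
      moreover have "AE x in PX. x \<in> space PX" by (rule AE_space)
      ultimately have "AE x in PX. good x"
      proof (eventually_elim)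
        case (elim x)
        then show ?case using hlt[of x] by force
      qed
      with nAE show False by blast
    qed
    define Bm where "Bm = Sigma_eff tmax PX QT QC pstar - M0"
    have Mstc: "Sigma_eff tmax PX QT QC pstar \<in> carrier_mat n n" unfolding n_def by (rule Sigma_eff_carrier)
    have Bmw: "bil Bm n w w = integral\<^sup>L PX (hw w pstar) - integral\<^sup>L PX (hw w \<pi>E)" for w
      unfolding Bm_def by (subst bil_minus[OF Mstc M0c]) (simp add: M0_def rep[OF pstarP] rep[OF piE])
    have Bneg: "bil Bm n v v < 0" using D0 unfolding Bmw hv D_def by simp
    have symB: "symm Bm n" unfolding Bm_def
      by (rule symm_minus[OF Mstc M0c _ M0s]) (unfold n_def, rule Sigma_eff_symm)
    define pit where "pit = (\<lambda>t x. (1 - t) * \<pi>E x + t * pstar x)"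
    note pstarm[measurable]
    have pitP: "pit t \<in> Pi_alpha PX \<alpha>" if t0: "0 \<le> t" and t1: "t \<le> 1" for t
    proof -
      have "pit t \<in> borel_measurable PX" unfolding pit_def by measurable
      moreover have "\<alpha> \<le> pit t x \<and> pit t x \<le> 1 - \<alpha>" if x: "x \<in> space PX" for x
      proof -
        have e1: "\<alpha> \<le> \<pi>E x" "\<pi>E x \<le> 1 - \<alpha>" using piEb x by auto
        have e2: "\<alpha> \<le> pstar x" "pstar x \<le> 1 - \<alpha>" using pstarb x by auto
        have "(1 - t) * \<alpha> \<le> (1 - t) * \<pi>E x" "t * \<alpha> \<le> t * pstar x"
          "(1 - t) * \<pi>E x \<le> (1 - t) * (1 - \<alpha>)" "t * pstar x \<le> t * (1 - \<alpha>)"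
          using e1 e2 t0 t1 by (auto intro: mult_left_mono)
        then show ?thesis unfolding pit_def by (simp add: algebra_simps)
      qed
      ultimately show ?thesis unfolding Pi_alpha_def by blast
    qed
    define Mt where "Mt = (\<lambda>t. Sigma_eff tmax PX QT QC (pit t))"
    have Mtc: "Mt t \<in> carrier_mat n n" for t unfolding Mt_def n_def by (rule Sigma_eff_carrier)
    have Mts: "symm (Mt t) n" for t unfolding Mt_def n_def by (rule Sigma_eff_symm)
    have dom: "bil (Mt t) n w w \<le> bil M0 n w w + t * bil Bm n w w" if t0: "0 < t" and t1: "t \<le> 1" for t w
    proof -
      have pt: "pit t \<in> Pi_alpha PX \<alpha>" using pitP t0 t1 by simp
      have pw: "hw w (pit t) x \<le> (1 - t) * hw w \<pi>E x + t * hw w pstar x" if x: "x \<in> space PX" for x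
      proof -
        have e1: "\<alpha> \<le> \<pi>E x" "\<pi>E x \<le> 1 - \<alpha>" using piEb x by auto
        have e2: "\<alpha> \<le> pstar x" "pstar x \<le> 1 - \<alpha>" using pstarb x by auto
        have q1: "0 \<le> bil (Sigma_cond tmax (QT x True) (QC x True)) n w w" unfolding n_def by (rule Sigma_cond_psd)
        have q0: "0 \<le> bil (Sigma_cond tmax (QT x False) (QC x False)) n w w" unfolding n_def by (rule Sigma_cond_psd)
        have i1: "bil (Sigma_cond tmax (QT x True) (QC x True)) n w w / pit t x
            \<le> (1 - t) * (bil (Sigma_cond tmax (QT x True) (QC x True)) n w w / \<pi>E x)
              + t * (bil (Sigma_cond tmax (QT x True) (QC x True)) n w w / pstar x)"
          unfolding pit_def by (rule conv_inv[OF q1]) (use e1 e2 alpha_pos t0 t1 in auto)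
        have om: "1 - pit t x = (1 - t) * (1 - \<pi>E x) + t * (1 - pstar x)" unfolding pit_def by (simp add: algebra_simps)
        have i0: "bil (Sigma_cond tmax (QT x False) (QC x False)) n w w / (1 - pit t x)
            \<le> (1 - t) * (bil (Sigma_cond tmax (QT x False) (QC x False)) n w w / (1 - \<pi>E x))
              + t * (bil (Sigma_cond tmax (QT x False) (QC x False)) n w w / (1 - pstar x))"
          unfolding om by (rule conv_inv[OF q0]) (use e1 e2 alpha_pos t0 t1 in auto)
        show ?thesis using i1 i0 unfolding hw_def by (simp add: algebra_simps)
      qed
      have "integral\<^sup>L PX (hw w (pit t)) \<le> (\<integral>x. (1 - t) * hw w \<pi>E x + t * hw w pstar x \<partial>PX)"
        by (rule integral_mono) (use pw hwint[OF pt] hwint[OF piE] hwint[OF pstarP] in auto)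
      also have "\<dots> = (1 - t) * integral\<^sup>L PX (hw w \<pi>E) + t * integral\<^sup>L PX (hw w pstar)"
        using hwint[OF piE] hwint[OF pstarP] by simp
      finally have "integral\<^sup>L PX (hw w (pit t)) \<le> (1 - t) * integral\<^sup>L PX (hw w \<pi>E) + t * integral\<^sup>L PX (hw w pstar)" .
      then show ?thesis unfolding Mt_def rep[OF pt] M0_def rep[OF piE] Bmw by (simp add: algebra_simps)
    qed
    obtain t where t: "0 < t" "t \<le> 1" "lambda_max (Mt t) < lam"
      using core[OF M0c M0s n0 Mtc Mts v1 eig lam_def simple Bneg dom symB] by blast
    have "lambda_max M0 \<le> lambda_max (Mt t)"
      using opt pitP[of t] t unfolding E_optimal_def M0_def Mt_def by auto
    then show False using t lam_def by simp
  qed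
  then show "AE x in PX. let q1 = vv \<bullet> (Sigma_cond tmax (QT x True) (QC x True) *\<^sub>v vv);
                  q0 = vv \<bullet> (Sigma_cond tmax (QT x False) (QC x False) *\<^sub>v vv)
              in sqrt q1 + sqrt q0 > 0 \<longrightarrow> \<pi>E x = clip \<alpha> (sqrt q1 / (sqrt q1 + sqrt q0))"
    by (rule eventually_mono) (simp add: Qeq good_def Let_def)
qed


end
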